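(* For any parameters $(V,W)$ of the one-layer transformer (no CoT, $k=0$), $\mathcal L^{\mathrm{Eval}}(V,W)\ge\Theta\!\left(\frac{d^2}{n}\right)$. Moreover, if $n=\tilde\Theta(d)$, then $\mathcal L^{\mathrm{Eval}}(V,W)=\tilde\Theta(d)\to+\infty$ as $d\to+\infty$.
   Context: Let $d,n\ge1$ and $d_e=2d+2$. Sample $\mathbf w^*\sim\mathcal N(0,I_d)$ and, independently, $\mathbf x_1,\dots,\mathbf x_n$ i.i.d. $\mathcal N(0,I_d)$. Set $y_i=\mathbf w^{*\top}\mathbf x_i$, $X=[\mathbf x_1,\dots,\mathbf x_n]$ and $\mathbf y=(y_1,\dots,y_n)$. For $V,W\in\mathbb R^{d_e\times d_e}$, define $f_{\mathrm{LSA}}(Z;V,W)=Z+VZ\,\frac{Z^\top WZ}{n}$. The input is $$Z_0=\begin{bmatrix}X&0_d\\ \mathbf y&0\\ 0_{d\times n}&0_d\\ 0_{1\times n}&1\end{bmatrix}\in\mathbb R^{d_e\times (n+1)}.$$ The evaluation loss without chain of thought is $$\mathcal L^{\mathrm{Eval}}(V,W)=\tfrac12\,\mathbb E\Big[\big\|f_{\mathrm{LSA}}(Z_0;V,W)_{[:,-1]}-(0_d,0,\mathbf w^*,1)\big\|^2\Big].$$ $\Theta,\tilde\Theta$ are asymptotic notations in $d,n$; $\tilde\Theta$ hides logarithmic factors. *)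

theory Defs
  imports "HOL-Probability.Probability"
begin

definition std_gauss :: "real measure" where
  "std_gauss = density lborel std_normal_density"

text \<open>Index set of all i.i.d. standard Gaussian coordinates:
  Inl j  ~ coordinate j of w* (j < d);  Inr (i,j) ~ coordinate j of x_i (i < n, j < d).\<close>
definition gauss_idx :: "nat \<Rightarrow> nat \<Rightarrow> (nat + nat \<times> nat) set" where
  "gauss_idx d n = Inl ` {..<d} \<union> Inr ` ({..<n} \<times> {..<d})"

definition data_measure :: "nat \<Rightarrow> nat \<Rightarrow> ((nat + nat \<times> nat) \<Rightarrow> real) measure" where
  "data_measure d n = PiM (gauss_idx d n) (\<lambda>_. std_gauss)"

definition emb_dim :: "nat \<Rightarrow> nat" where
  "emb_dim d = 2 * d + 2"

text \<open>The input Z_0, a d_e x (n+1) matrix; rows 0..d_e-1, columns 0..n (column n is the last one).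
  Rows 0..d-1: X; row d: y; rows d+1..2d: zero; row 2d+1: (0,...,0,1).\<close>
definition Z0 :: "nat \<Rightarrow> nat \<Rightarrow> ((nat + nat \<times> nat) \<Rightarrow> real) \<Rightarrow> nat \<Rightarrow> nat \<Rightarrow> real" where
  "Z0 d n \<omega> r c =
     (if c < n then
        (if r < d then \<omega> (Inr (c, r))
         else if r = d then (\<Sum>j<d. \<omega> (Inl j) * \<omega> (Inr (c, j)))
         else 0)
      else if c = n \<and> r = 2 * d + 1 then 1 else 0)"

text \<open>Last column of f_LSA(Z;V,W) = Z + V Z (Z^T W Z)/n, matrices V W of size d_e x d_e.\<close>
definition lsa_last :: "nat \<Rightarrow> nat \<Rightarrow> (nat \<Rightarrow> nat \<Rightarrow> real) \<Rightarrow> (nat \<Rightarrow> nat \<Rightarrow> real)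
    \<Rightarrow> (nat \<Rightarrow> nat \<Rightarrow> real) \<Rightarrow> nat \<Rightarrow> real" where
  "lsa_last d n V W Z r =
     Z r n + (\<Sum>a<emb_dim d. V r a *
        (\<Sum>c\<le>n. Z a c * (\<Sum>p<emb_dim d. \<Sum>q<emb_dim d. Z p c * W p q * Z q n))) / real n"

definition target_last :: "nat \<Rightarrow> ((nat + nat \<times> nat) \<Rightarrow> real) \<Rightarrow> nat \<Rightarrow> real" where
  "target_last d \<omega> r =
     (if d < r \<and> r \<le> 2 * d then \<omega> (Inl (r - d - 1)) else if r = 2 * d + 1 then 1 else 0)"

definition eval_loss :: "nat \<Rightarrow> nat \<Rightarrow> (nat \<Rightarrow> nat \<Rightarrow> real) \<Rightarrow> (nat \<Rightarrow> nat \<Rightarrow> real) \<Rightarrow> real" where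
  "eval_loss d n V W =
     (1/2) * (\<integral>\<omega>. (\<Sum>r<emb_dim d. (lsa_last d n V W (Z0 d n \<omega>) r - target_last d \<omega> r)\<^sup>2)
               \<partial>data_measure d n)"

definition opt_eval_loss :: "nat \<Rightarrow> nat \<Rightarrow> real" where
  "opt_eval_loss d n = (INF VW. eval_loss d n (fst VW) (snd VW))"

end

theory Submission
  imports Defs
begin


lemma sg_prob: "prob_space std_gauss"
  unfolding std_gauss_def by (rule prob_space_normal_density) simp

lemma sg_sets[simp]: "sets std_gauss = sets borel"
  unfolding std_gauss_def by simp

lemma sg_space[simp]: "space std_gauss = UNIV"
  unfolding std_gauss_def by simp

lemma sg_integrable_pow: "integrable std_gauss (\<lambda>x. x ^ k)"
  unfolding std_gauss_def
  by (subst integrable_density) (auto simp: integrable_std_normal_moment)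

lemma sg_integrable_abspow: "integrable std_gauss (\<lambda>x. \<bar>x\<bar> ^ k)"
  unfolding std_gauss_def
  by (subst integrable_density) (auto simp: integrable_std_normal_moment_abs)

definition gm :: "nat \<Rightarrow> real" where "gm k = (\<integral>x. x ^ k \<partial>std_gauss)"

lemma gm_eq: "gm k = (\<integral>x. std_normal_density x * x ^ k \<partial>lborel)"
  unfolding gm_def std_gauss_def
  by (subst integral_density) auto

lemma gm_even: "gm (2*k) = fact (2 * k) / (2^k * fact k)"
  unfolding gm_eq by (rule integral_std_normal_moment_even)

lemma gm_odd: "gm (2*k+1) = 0"
  unfolding gm_eq by (rule integral_std_normal_moment_odd)

lemma gm_0[simp]: "gm 0 = 1" using gm_even[of 0] by simp
lemma gm_1[simp]: "gm 1 = 0" using gm_odd[of 0] by simp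
lemma gm_2[simp]: "gm 2 = 1" using gm_even[of 1] by (simp add: fact_numeral)
lemma gm_3[simp]: "gm 3 = 0" using gm_odd[of 1] by simp
lemma gm_4[simp]: "gm 4 = 3" using gm_even[of 2] by (simp add: fact_numeral)
lemma gm_S1[simp]: "gm (Suc 0) = 0" using gm_1 by simp
lemma gm_S2[simp]: "gm (Suc (Suc 0)) = 1" using gm_2 by (simp add: numeral_2_eq_2)
lemma gm_S3[simp]: "gm (Suc (Suc (Suc 0))) = 0" using gm_3 by (simp add: numeral_3_eq_3)
lemma gm_S4[simp]: "gm (Suc (Suc (Suc (Suc 0)))) = 3" using gm_4 by (simp add: numeral_eq_Suc)

abbreviation PG :: "'i set \<Rightarrow> ('i \<Rightarrow> real) measure" where "PG I \<equiv> PiM I (\<lambda>_. std_gauss)"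

lemma psf: "product_sigma_finite (\<lambda>_::'i. std_gauss)"
  unfolding product_sigma_finite_def
  using prob_space.finite_measure[OF sg_prob] finite_measure.sigma_finite_measure by blast

lemma PG_prob: "prob_space (PG I)"
  by (intro prob_space_PiM sg_prob)

lemma prod_list_count:
  assumes "set L \<subseteq> I" "finite I"
  shows "prod_list (map f L) = (\<Prod>i\<in>I. f i ^ count_list L i)"
  using assms(1)
proof (induction L)
  case Nil
  then show ?case by simp
next
  case (Cons a L)
  have aI: "a \<in> I" using Cons by auto
  have "(\<Prod>i\<in>I. f i ^ count_list (a # L) i) = (\<Prod>i\<in>I. (if i = a then f i else 1) * f i ^ count_list L i)"
    by (rule prod.cong) auto
  also have "\<dots> = (\<Prod>i\<in>I. (if i = a then f i else 1)) * (\<Prod>i\<in>I. f i ^ count_list L i)"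
    by (rule prod.distrib)
  also have "(\<Prod>i\<in>I. (if i = a then f i else 1)) = f a"
    using aI assms(2) by (simp add: prod.delta')
  finally show ?case using Cons by simp
qed

lemma mono_int:
  assumes "finite I" "set L \<subseteq> I"
  shows "integrable (PG I) (\<lambda>\<omega>. prod_list (map \<omega> L))"
    and "(\<integral>\<omega>. prod_list (map \<omega> L) \<partial>PG I) = (\<Prod>i\<in>set L. gm (count_list L i))"
proof -
  interpret product_sigma_finite "\<lambda>_::'a. std_gauss" by (rule psf)
  have eq: "(\<lambda>\<omega>. prod_list (map \<omega> L)) = (\<lambda>\<omega>. \<Prod>i\<in>I. (\<lambda>x. x ^ count_list L i) (\<omega> i))"
    using prod_list_count[OF assms(2,1)] by auto
  show "integrable (PG I) (\<lambda>\<omega>. prod_list (map \<omega> L))"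
    unfolding eq by (rule product_integrable_prod) (auto simp: assms sg_integrable_pow)
  have "(\<integral>\<omega>. prod_list (map \<omega> L) \<partial>PG I) = (\<Prod>i\<in>I. gm (count_list L i))"
    unfolding eq gm_def by (rule product_integral_prod) (auto simp: assms sg_integrable_pow)
  also have "\<dots> = (\<Prod>i\<in>set L. gm (count_list L i))"
    by (rule prod.mono_neutral_right) (use assms in \<open>auto simp: count_list_0_iff\<close>)
  finally show "(\<integral>\<omega>. prod_list (map \<omega> L) \<partial>PG I) = (\<Prod>i\<in>set L. gm (count_list L i))" .
qed

lemma mono_E2:
  assumes "finite I" "a \<in> I" "b \<in> I"
  shows "(\<integral>\<omega>. \<omega> a * \<omega> b \<partial>PG I) = (if a = b then 1 else 0)"
  using mono_int(2)[OF assms(1), of "[a,b]"] assms by (auto simp: numeral_2_eq_2)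

lemma mono_E4:
  assumes "finite I" "a \<in> I" "b \<in> I" "c \<in> I" "e \<in> I"
  shows "(\<integral>\<omega>. \<omega> a * \<omega> b * \<omega> c * \<omega> e \<partial>PG I) =
     (if a = b \<and> c = e then 1 else 0) + (if a = c \<and> b = e then 1 else 0) + (if a = e \<and> b = c then 1 else 0)"
proof -
  have "(\<integral>\<omega>. \<omega> a * \<omega> b * \<omega> c * \<omega> e \<partial>PG I) = (\<Prod>i\<in>set [a,b,c,e]. gm (count_list [a,b,c,e] i))"
    using mono_int(2)[OF assms(1), of "[a,b,c,e]"] assms by (simp add: mult.assoc)
  also have "\<dots> = (if a = b \<and> c = e then 1 else 0) + (if a = c \<and> b = e then 1 else 0) + (if a = e \<and> b = c then 1 else 0)"
    by (cases "a = b"; cases "a = c"; cases "a = e"; cases "b = c"; cases "b = e"; cases "c = e")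
       (auto simp: insert_commute)
  finally show ?thesis .
qed

lemma mono_split:
  assumes "finite I" "set L1 \<subseteq> I" "set L2 \<subseteq> I" "set L1 \<inter> set L2 = {}"
  shows "(\<integral>\<omega>. prod_list (map \<omega> (L1 @ L2)) \<partial>PG I) =
         (\<integral>\<omega>. prod_list (map \<omega> L1) \<partial>PG I) * (\<integral>\<omega>. prod_list (map \<omega> L2) \<partial>PG I)"
proof -
  have "(\<integral>\<omega>. prod_list (map \<omega> (L1 @ L2)) \<partial>PG I) =
     (\<Prod>i\<in>set L1 \<union> set L2. gm (count_list L1 i + count_list L2 i))"
    using mono_int(2)[OF assms(1), of "L1 @ L2"] assms by simp
  also have "\<dots> = (\<Prod>i\<in>set L1. gm (count_list L1 i + count_list L2 i)) *
                   (\<Prod>i\<in>set L2. gm (count_list L1 i + count_list L2 i))"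
    by (rule prod.union_disjoint) (use assms in auto)
  also have "(\<Prod>i\<in>set L1. gm (count_list L1 i + count_list L2 i)) = (\<Prod>i\<in>set L1. gm (count_list L1 i))"
  proof (rule prod.cong)
    fix x assume "x \<in> set L1"
    then have "x \<notin> set L2" using assms(4) by auto
    then show "gm (count_list L1 x + count_list L2 x) = gm (count_list L1 x)" by simp
  qed simp
  also have "(\<Prod>i\<in>set L2. gm (count_list L1 i + count_list L2 i)) = (\<Prod>i\<in>set L2. gm (count_list L2 i))"
  proof (rule prod.cong)
    fix x assume "x \<in> set L2"
    then have "x \<notin> set L1" using assms(4) by auto
    then show "gm (count_list L1 x + count_list L2 x) = gm (count_list L2 x)" by simp
  qed simp
  finally show ?thesis using mono_int(2)[OF assms(1,2)] mono_int(2)[OF assms(1,3)] by simp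
qed

lemma mono_E6:
  assumes "finite I" "a \<in> I" "b \<in> I" "p \<in> I" "q \<in> I" "r \<in> I" "s \<in> I"
    and "{a,b} \<inter> {p,q,r,s} = {}"
  shows "(\<integral>\<omega>. \<omega> a * \<omega> b * (\<omega> p * \<omega> q * \<omega> r * \<omega> s) \<partial>PG I) =
     (if a = b then 1 else 0) * ((if p = q \<and> r = s then 1 else 0) + (if p = r \<and> q = s then 1 else 0) + (if p = s \<and> q = r then 1 else 0))"
proof -
  have "(\<integral>\<omega>. \<omega> a * \<omega> b * (\<omega> p * \<omega> q * \<omega> r * \<omega> s) \<partial>PG I) =
        (\<integral>\<omega>. prod_list (map \<omega> ([a,b] @ [p,q,r,s])) \<partial>PG I)"
    by (simp add: mult.assoc)
  also have "\<dots> = (\<integral>\<omega>. prod_list (map \<omega> [a,b]) \<partial>PG I) * (\<integral>\<omega>. prod_list (map \<omega> [p,q,r,s]) \<partial>PG I)"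
    by (rule mono_split) (use assms in auto)
  also have "\<dots> = (\<integral>\<omega>. \<omega> a * \<omega> b \<partial>PG I) * (\<integral>\<omega>. \<omega> p * \<omega> q * \<omega> r * \<omega> s \<partial>PG I)"
    by (simp add: mult.assoc)
  finally show ?thesis using mono_E2[OF assms(1,2,3)] mono_E4[OF assms(1,4,5,6,7)] by simp
qed

definition gd :: "'a measure \<Rightarrow> ('a \<Rightarrow> real) \<Rightarrow> bool" where
  "gd M f \<longleftrightarrow> f \<in> borel_measurable M \<and> (\<forall>p::nat. integrable M (\<lambda>x. \<bar>f x\<bar> ^ p))"

lemma abs_add_pow: "\<bar>a + b\<bar> ^ p \<le> 2 ^ p * (\<bar>a\<bar> ^ p + \<bar>b::real\<bar> ^ p)"
proof -
  have "\<bar>a + b\<bar> \<le> 2 * max \<bar>a\<bar> \<bar>b\<bar>" by auto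
  then have "\<bar>a + b\<bar> ^ p \<le> (2 * max \<bar>a\<bar> \<bar>b\<bar>) ^ p" by (rule power_mono) simp
  also have "\<dots> = 2 ^ p * max \<bar>a\<bar> \<bar>b\<bar> ^ p" by (simp add: power_mult_distrib)
  also have "max \<bar>a\<bar> \<bar>b\<bar> ^ p \<le> \<bar>a\<bar> ^ p + \<bar>b\<bar> ^ p"
    by (cases "\<bar>a\<bar> \<le> \<bar>b\<bar>") (auto simp: max_def)
  finally show ?thesis by simp
qed

lemma abs_mult_pow: "\<bar>a * b\<bar> ^ p \<le> \<bar>a\<bar> ^ (2*p) + \<bar>b::real\<bar> ^ (2*p)"
proof -
  have "\<bar>a * b\<bar> ^ p = \<bar>a\<bar> ^ p * \<bar>b\<bar> ^ p" by (simp add: abs_mult power_mult_distrib)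
  also have "\<dots> \<le> (\<bar>a\<bar> ^ p)\<^sup>2 + (\<bar>b\<bar> ^ p)\<^sup>2"
    using sum_squares_bound[of "\<bar>a\<bar> ^ p" "\<bar>b\<bar> ^ p"]
  proof -
    have "2 * (\<bar>a\<bar> ^ p) * (\<bar>b\<bar> ^ p) \<le> (\<bar>a\<bar> ^ p)\<^sup>2 + (\<bar>b\<bar> ^ p)\<^sup>2" by (rule sum_squares_bound)
    moreover have "0 \<le> \<bar>a\<bar> ^ p * \<bar>b\<bar> ^ p" by simp
    ultimately show ?thesis by linarith
  qed
  also have "\<dots> = \<bar>a\<bar> ^ (2*p) + \<bar>b\<bar> ^ (2*p)" by (simp add: power_mult[symmetric] mult.commute)
  finally show ?thesis .
qed

lemma gd_integrable: "gd M f \<Longrightarrow> integrable M f"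
proof -
  assume "gd M f"
  then have "f \<in> borel_measurable M" "integrable M (\<lambda>x. \<bar>f x\<bar> ^ 1)" unfolding gd_def by blast+
  then show ?thesis using integrable_abs_iff[of f M] by simp
qed

lemma gd_meas: "gd M f \<Longrightarrow> f \<in> borel_measurable M"
  unfolding gd_def by auto

lemma gd_const: "finite_measure M \<Longrightarrow> gd M (\<lambda>_. c)"
  unfolding gd_def by (auto intro: finite_measure.integrable_const)

lemma gd_add:
  assumes "gd M f" "gd M g" shows "gd M (\<lambda>x. f x + g x)"
  unfolding gd_def
proof (intro conjI allI)
  show "(\<lambda>x. f x + g x) \<in> borel_measurable M" using assms unfolding gd_def by auto
  fix p :: nat
  show "integrable M (\<lambda>x. \<bar>f x + g x\<bar> ^ p)"
  proof (rule Bochner_Integration.integrable_bound)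
    show "integrable M (\<lambda>x. 2 ^ p * (\<bar>f x\<bar> ^ p + \<bar>g x\<bar> ^ p))"
      using assms unfolding gd_def by auto
    show "(\<lambda>x. \<bar>f x + g x\<bar> ^ p) \<in> borel_measurable M" using assms unfolding gd_def by auto
    show "AE x in M. norm (\<bar>f x + g x\<bar> ^ p) \<le> norm (2 ^ p * (\<bar>f x\<bar> ^ p + \<bar>g x\<bar> ^ p))"
      using abs_add_pow by auto
  qed
qed

lemma gd_mult:
  assumes "gd M f" "gd M g" shows "gd M (\<lambda>x. f x * g x)"
  unfolding gd_def
proof (intro conjI allI)
  show "(\<lambda>x. f x * g x) \<in> borel_measurable M" using assms unfolding gd_def by auto
  fix p :: nat
  show "integrable M (\<lambda>x. \<bar>f x * g x\<bar> ^ p)"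
  proof (rule Bochner_Integration.integrable_bound)
    show "integrable M (\<lambda>x. \<bar>f x\<bar> ^ (2*p) + \<bar>g x\<bar> ^ (2*p))"
      using assms unfolding gd_def by auto
    show "(\<lambda>x. \<bar>f x * g x\<bar> ^ p) \<in> borel_measurable M" using assms unfolding gd_def by auto
    show "AE x in M. norm (\<bar>f x * g x\<bar> ^ p) \<le> norm (\<bar>f x\<bar> ^ (2*p) + \<bar>g x\<bar> ^ (2*p))"
      using abs_mult_pow by auto
  qed
qed

lemma gd_uminus: "gd M f \<Longrightarrow> gd M (\<lambda>x. - f x)"
  unfolding gd_def by auto

lemma gd_diff: "gd M f \<Longrightarrow> gd M g \<Longrightarrow> gd M (\<lambda>x. f x - g x)"
  using gd_add[of M f "\<lambda>x. - g x"] gd_uminus[of M g] by simp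

lemma gd_cmult: "finite_measure M \<Longrightarrow> gd M f \<Longrightarrow> gd M (\<lambda>x. c * f x)"
  using gd_mult[OF gd_const] by blast

lemma gd_multc: "finite_measure M \<Longrightarrow> gd M f \<Longrightarrow> gd M (\<lambda>x. f x * c)"
  using gd_mult[OF _ gd_const] by blast

lemma gd_divide: "finite_measure M \<Longrightarrow> gd M f \<Longrightarrow> gd M (\<lambda>x. f x / c)"
  using gd_multc[of M f "1/c"] by simp

lemma gd_sum: "finite_measure M \<Longrightarrow> (\<And>i. i \<in> A \<Longrightarrow> gd M (f i)) \<Longrightarrow> gd M (\<lambda>x. \<Sum>i\<in>A. f i x)"
proof (induction A rule: infinite_finite_induct)
  case (infinite A)
  then show ?case by (simp add: gd_const)
next
  case empty
  then show ?case by (simp add: gd_const)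
next
  case (insert a A)
  then show ?case by (simp add: gd_add)
qed

lemma gd_coord:
  fixes I :: "'i set"
  assumes "finite I" "i \<in> I" shows "gd (PG I) (\<lambda>\<omega>. \<omega> i)"
  unfolding gd_def
proof (intro conjI allI)
  interpret product_sigma_finite "\<lambda>_::'i. std_gauss" by (rule psf)
  show "(\<lambda>\<omega>. \<omega> i) \<in> borel_measurable (PG I)"
  proof -
    have "(\<lambda>\<omega>. \<omega> i) \<in> measurable (PG I) std_gauss" by (rule measurable_component_singleton) fact
    then show ?thesis using measurable_cong_sets[OF refl sg_sets] by blast
  qed
  fix p :: nat
  define h where "h = (\<lambda>k. if k = i then (\<lambda>x. \<bar>x\<bar> ^ p) else (\<lambda>_. 1::real))"
  have eq: "(\<lambda>\<omega>. \<bar>\<omega> i\<bar> ^ p) = (\<lambda>\<omega>. \<Prod>k\<in>I. h k (\<omega> k))"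
  proof
    fix \<omega> :: "'i \<Rightarrow> real"
    have "(\<Prod>k\<in>I. h k (\<omega> k)) = (\<Prod>k\<in>I. if k = i then \<bar>\<omega> k\<bar> ^ p else 1)"
      by (rule prod.cong) (auto simp: h_def)
    also have "\<dots> = \<bar>\<omega> i\<bar> ^ p" using assms by (simp add: prod.delta')
    finally show "\<bar>\<omega> i\<bar> ^ p = (\<Prod>k\<in>I. h k (\<omega> k))" by simp
  qed
  show "integrable (PG I) (\<lambda>\<omega>. \<bar>\<omega> i\<bar> ^ p)"
    unfolding eq
    by (rule product_integrable_prod)
       (auto simp: h_def assms sg_integrable_abspow intro: finite_measure.integrable_const prob_space.finite_measure sg_prob)
qed

lemma PG_comp:
  fixes I :: "'i set"
  assumes "i \<in> I" shows "(\<lambda>\<omega>. \<omega> i) \<in> borel_measurable (PG I)"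
proof -
  have "(\<lambda>\<omega>. \<omega> i) \<in> measurable (PG I) std_gauss" by (rule measurable_component_singleton) fact
  then show ?thesis using measurable_cong_sets[OF refl sg_sets] by blast
qed

lemma sg_sym:
  assumes "A \<in> sets borel"
  shows "emeasure std_gauss (uminus -` A) = emeasure std_gauss A"
proof -
  have [measurable]: "A \<in> sets borel" by fact
  have "emeasure std_gauss (uminus -` A) = (\<integral>\<^sup>+x. ennreal (std_normal_density x) * indicator (uminus -` A) x \<partial>lborel)"
    unfolding std_gauss_def using measurable_sets_borel[of "uminus::real\<Rightarrow>real" borel A] assms by (subst emeasure_density) auto
  also have "\<dots> = (\<integral>\<^sup>+x. ennreal (std_normal_density (0 + (-1) * x)) * indicator A (0 + (-1) * x) \<partial>lborel)"
    by (intro nn_integral_cong) (auto simp: std_normal_density_def indicator_def)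
  also have "\<dots> = (\<integral>\<^sup>+x. ennreal (std_normal_density x) * indicator A x \<partial>lborel)"
    using nn_integral_real_affine[of "\<lambda>x. ennreal (std_normal_density x) * indicator A x" "-1" 0] by simp
  also have "\<dots> = emeasure std_gauss A"
    unfolding std_gauss_def by (subst emeasure_density) auto
  finally show ?thesis .
qed

lemma sg_sym':
  assumes "A \<in> sets borel" "c = 1 \<or> c = (-1::real)"
  shows "emeasure std_gauss ((\<lambda>x. c * x) -` A) = emeasure std_gauss A"
  using assms(2)
proof
  assume "c = -1"
  then have "(\<lambda>x. c * x) -` A = uminus -` A" by auto
  then show ?thesis using sg_sym[OF assms(1)] by simp
qed simp

lemma PG_reflect:
  fixes I :: "'i set" and s :: "'i \<Rightarrow> real"
  assumes fin: "finite I" and s: "\<And>i. s i = 1 \<or> s i = -1"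
  shows "distr (PG I) (PG I) (\<lambda>\<omega>. restrict (\<lambda>i. s i * \<omega> i) I) = PG I"
proof -
  interpret product_sigma_finite "\<lambda>_::'i. std_gauss" by (rule psf)
  let ?F = "\<lambda>\<omega>. restrict (\<lambda>i. s i * \<omega> i) I"
  have Fm: "?F \<in> measurable (PG I) (PG I)"
    by (rule measurable_restrict) (auto simp: measurable_cong_sets[OF refl sg_sets] intro!: borel_measurable_times PG_comp fin)
  show ?thesis
  proof (rule PiM_eqI[OF fin])
    show "sets (distr (PG I) (PG I) ?F) = sets (PG I)" by simp
    fix A assume A: "\<And>i. i \<in> I \<Longrightarrow> A i \<in> sets std_gauss"
    have PA: "Pi\<^sub>E I A \<in> sets (PG I)" using A fin by (intro sets_PiM_I_finite) auto
    have "emeasure (distr (PG I) (PG I) ?F) (Pi\<^sub>E I A) = emeasure (PG I) (?F -` Pi\<^sub>E I A \<inter> space (PG I))"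
      by (rule emeasure_distr[OF Fm PA])
    also have "?F -` Pi\<^sub>E I A \<inter> space (PG I) = Pi\<^sub>E I (\<lambda>i. (\<lambda>x. s i * x) -` A i)"
      by (auto simp: space_PiM PiE_def Pi_def extensional_def)
    also have "emeasure (PG I) (Pi\<^sub>E I (\<lambda>i. (\<lambda>x. s i * x) -` A i)) = (\<Prod>i\<in>I. emeasure std_gauss ((\<lambda>x. s i * x) -` A i))"
    proof (intro emeasure_PiM fin)
      fix i assume i: "i \<in> I"
      have m: "(\<lambda>x. s i * x) \<in> borel_measurable borel" by measurable
      show "(\<lambda>x. s i * x) -` A i \<in> sets std_gauss"
        using measurable_sets_borel[OF m, of "A i"] A[OF i] by simp
    qed
    also have "\<dots> = (\<Prod>i\<in>I. emeasure std_gauss (A i))"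
      using A s by (intro prod.cong refl sg_sym') auto
    finally show "emeasure (distr (PG I) (PG I) ?F) (Pi\<^sub>E I A) = (\<Prod>i\<in>I. emeasure std_gauss (A i))" .
  qed
qed

lemma PG_reflect_integral:
  fixes I :: "'i set" and s :: "'i \<Rightarrow> real" and g :: "('i \<Rightarrow> real) \<Rightarrow> real"
  assumes fin: "finite I" and s: "\<And>i. s i = 1 \<or> s i = -1"
    and g: "g \<in> borel_measurable (PG I)"
  shows "(\<integral>\<omega>. g \<omega> \<partial>PG I) = (\<integral>\<omega>. g (restrict (\<lambda>i. s i * \<omega> i) I) \<partial>PG I)"
proof -
  let ?F = "\<lambda>\<omega>. restrict (\<lambda>i. s i * \<omega> i) I"
  have Fm: "?F \<in> measurable (PG I) (PG I)"
    by (rule measurable_restrict) (auto simp: measurable_cong_sets[OF refl sg_sets] intro!: borel_measurable_times PG_comp fin)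
  have "(\<integral>\<omega>. g \<omega> \<partial>PG I) = (\<integral>\<omega>. g \<omega> \<partial>distr (PG I) (PG I) ?F)"
    using PG_reflect[OF fin s] by simp
  also have "\<dots> = (\<integral>\<omega>. g (?F \<omega>) \<partial>PG I)"
    using Fm g by (rule integral_distr)
  finally show ?thesis .
qed



lemma gi_finite[simp]: "finite (gauss_idx d n)"
  unfolding gauss_idx_def by simp

lemma gi_Inl[simp]: "Inl m \<in> gauss_idx d n \<longleftrightarrow> m < d"
  unfolding gauss_idx_def by auto

lemma gi_Inr[simp]: "Inr (c, k) \<in> gauss_idx d n \<longleftrightarrow> c < n \<and> k < d"
  unfolding gauss_idx_def by auto

lemma dm_eq: "data_measure d n = PG (gauss_idx d n)"
  unfolding data_measure_def by simp

lemma int4_gi: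
  assumes "a \<in> gauss_idx d n" "b \<in> gauss_idx d n" "c \<in> gauss_idx d n" "e \<in> gauss_idx d n"
  shows "integrable (PG (gauss_idx d n)) (\<lambda>\<omega>. \<omega> a * \<omega> b * \<omega> c * \<omega> e)"
  using mono_int(1)[of "gauss_idx d n" "[a,b,c,e]"] assms by (simp add: mult.assoc)

lemma int6_gi:
  assumes "a \<in> gauss_idx d n" "b \<in> gauss_idx d n" "p \<in> gauss_idx d n" "q \<in> gauss_idx d n"
     "r \<in> gauss_idx d n" "s \<in> gauss_idx d n"
  shows "integrable (PG (gauss_idx d n)) (\<lambda>\<omega>. \<omega> a * \<omega> b * (\<omega> p * \<omega> q * \<omega> r * \<omega> s))"
  using mono_int(1)[of "gauss_idx d n" "[a,b,p,q,r,s]"] assms by (simp add: mult.assoc)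

lemma int_sum1:
  fixes f :: "'i \<Rightarrow> 'a \<Rightarrow> real"
  assumes "\<And>c. c \<in> A \<Longrightarrow> integrable M (f c)"
  shows "(\<integral>x. (\<Sum>c\<in>A. a c * f c x) \<partial>M) = (\<Sum>c\<in>A. a c * (\<integral>x. f c x \<partial>M))"
  using assms by simp

lemma int_sum1_i:
  fixes f :: "'i \<Rightarrow> 'a \<Rightarrow> real"
  assumes "\<And>c. c \<in> A \<Longrightarrow> integrable M (f c)"
  shows "integrable M (\<lambda>x. \<Sum>c\<in>A. a c * f c x)"
  using assms by auto

lemma int_sum3:
  fixes f :: "'i \<Rightarrow> 'j \<Rightarrow> 'k \<Rightarrow> 'a \<Rightarrow> real"
  assumes "\<And>c m k. c \<in> A \<Longrightarrow> m \<in> B \<Longrightarrow> k \<in> C \<Longrightarrow> integrable M (f c m k)"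
  shows "(\<integral>x. (\<Sum>c\<in>A. \<Sum>m\<in>B. \<Sum>k\<in>C. a c m k * f c m k x) \<partial>M) =
         (\<Sum>c\<in>A. \<Sum>m\<in>B. \<Sum>k\<in>C. a c m k * (\<integral>x. f c m k x \<partial>M))"
proof -
  have i3: "integrable M (\<lambda>x. \<Sum>k\<in>C. a c m k * f c m k x)" if "c \<in> A" "m \<in> B" for c m
    using assms that by auto
  have i2: "integrable M (\<lambda>x. \<Sum>m\<in>B. \<Sum>k\<in>C. a c m k * f c m k x)" if "c \<in> A" for c
    using i3 that by auto
  show ?thesis
    using assms i2 i3 by (simp add: integral_sum)
qed

lemma if_conj0: "(if P \<and> Q then x else (0::real)) = (if P then if Q then x else 0 else 0)"
  by simp

lemma sum_ifP: "(\<Sum>k\<in>B. if P then f k else (0::real)) = (if P then (\<Sum>k\<in>B. f k) else 0)"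
  by simp

lemmas delta_simps = if_conj0 sum_ifP sum.delta sum.delta'

definition yv :: "nat \<Rightarrow> (nat + nat \<times> nat \<Rightarrow> real) \<Rightarrow> nat \<Rightarrow> real" where
  "yv d \<omega> c = (\<Sum>m<d. \<omega> (Inl m) * \<omega> (Inr (c, m)))"

definition Qf :: "nat \<Rightarrow> nat \<Rightarrow> (nat \<Rightarrow> real) \<Rightarrow> (nat + nat \<times> nat \<Rightarrow> real) \<Rightarrow> real" where
  "Qf d n \<gamma> \<omega> = (\<Sum>c<n. (\<Sum>k<d. \<gamma> k * \<omega> (Inr (c, k))) * yv d \<omega> c) / real n"

lemma K1:
  assumes j: "j < d" and n: "1 \<le> n"
  shows "(\<integral>\<omega>. \<omega> (Inl j) * Qf d n \<gamma> \<omega> \<partial>PG (gauss_idx d n)) = \<gamma> j"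
proof -
  have eq: "(\<lambda>\<omega>. \<omega> (Inl j) * Qf d n \<gamma> \<omega>) = (\<lambda>\<omega>. \<Sum>c<n. \<Sum>m<d. \<Sum>k<d. (\<gamma> k / real n) *
      (\<omega> (Inl j) * \<omega> (Inl m) * \<omega> (Inr (c, k)) * \<omega> (Inr (c, m))))"
    by (auto simp: Qf_def yv_def sum_distrib_left sum_distrib_right sum_divide_distrib sum_product mult_ac)
  have "(\<integral>\<omega>. \<omega> (Inl j) * Qf d n \<gamma> \<omega> \<partial>PG (gauss_idx d n)) =
      (\<Sum>c<n. \<Sum>m<d. \<Sum>k<d. (\<gamma> k / real n) *
      (\<integral>\<omega>. \<omega> (Inl j) * \<omega> (Inl m) * \<omega> (Inr (c, k)) * \<omega> (Inr (c, m)) \<partial>PG (gauss_idx d n)))"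
    unfolding eq using j by (intro int_sum3) (simp add: int4_gi)
  also have "\<dots> = (\<Sum>c<n. \<Sum>m<d. \<Sum>k<d. (\<gamma> k / real n) * (if j = m \<and> k = m then 1 else 0))"
    using j by (simp add: mono_E4)
  also have "\<dots> = (\<Sum>c<n. \<gamma> j / real n)"
    using j by (simp add: if_distrib[of "\<lambda>x. _ * x"] delta_simps cong: if_cong)
  also have "\<dots> = \<gamma> j" using n by simp
  finally show ?thesis .
qed

lemma sum3_delta:
  fixes g :: "nat \<Rightarrow> real"
  assumes "finite A" "finite B"
  shows "(\<Sum>m\<in>A. \<Sum>k\<in>B. \<Sum>m'\<in>A. g k * ((if m' = m then 1 else 0) * F m' k m)) = (\<Sum>k\<in>B. \<Sum>m\<in>A. g k * F m k m)"
proof -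
  have "(\<Sum>m\<in>A. \<Sum>k\<in>B. \<Sum>m'\<in>A. g k * ((if m' = m then 1 else 0) * F m' k m)) =
        (\<Sum>m\<in>A. \<Sum>k\<in>B. \<Sum>m'\<in>A. (if m' = m then g k * F m' k m else 0))"
    by (intro sum.cong refl) auto
  also have "\<dots> = (\<Sum>m\<in>A. \<Sum>k\<in>B. g k * F m k m)"
    using assms by (intro sum.cong refl) (simp add: sum.delta)
  also have "\<dots> = (\<Sum>k\<in>B. \<Sum>m\<in>A. g k * F m k m)"
    by (rule sum.swap)
  finally show ?thesis .
qed

lemma E_pair:
  assumes j: "j < d" and c: "c < n" and c': "c' < n"
  shows "(\<integral>\<omega>. (\<omega> (Inr (c', j)) * yv d \<omega> c') * ((\<Sum>k<d. \<gamma> k * \<omega> (Inr (c, k))) * yv d \<omega> c) \<partial>PG (gauss_idx d n))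
     = (if c' = c then (real d + 2) * \<gamma> j else \<gamma> j)"
proof -
  let ?F = "\<lambda>m' k m::nat. (if j = m' \<and> k = m then 1 else 0) +
                  (if c' = c \<and> j = k \<and> m' = m then 1 else 0) +
                  (if c' = c \<and> j = m \<and> m' = k then 1 else (0::real))"
  have eq: "(\<lambda>\<omega>. (\<omega> (Inr (c', j)) * yv d \<omega> c') * ((\<Sum>k<d. \<gamma> k * \<omega> (Inr (c, k))) * yv d \<omega> c)) =
     (\<lambda>\<omega>. \<Sum>m<d. \<Sum>k<d. \<Sum>m'<d. \<gamma> k * (\<omega> (Inl m') * \<omega> (Inl m) *
         (\<omega> (Inr (c', j)) * \<omega> (Inr (c', m')) * \<omega> (Inr (c, k)) * \<omega> (Inr (c, m)))))"
    by (auto simp: yv_def sum_distrib_left sum_distrib_right sum_product mult_ac)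
  have "(\<integral>\<omega>. (\<omega> (Inr (c', j)) * yv d \<omega> c') * ((\<Sum>k<d. \<gamma> k * \<omega> (Inr (c, k))) * yv d \<omega> c) \<partial>PG (gauss_idx d n))
     = (\<Sum>m<d. \<Sum>k<d. \<Sum>m'<d. \<gamma> k * (\<integral>\<omega>. \<omega> (Inl m') * \<omega> (Inl m) *
         (\<omega> (Inr (c', j)) * \<omega> (Inr (c', m')) * \<omega> (Inr (c, k)) * \<omega> (Inr (c, m))) \<partial>PG (gauss_idx d n)))"
    unfolding eq using j c c' by (intro int_sum3) (simp add: int6_gi)
  also have "\<dots> = (\<Sum>m<d. \<Sum>k<d. \<Sum>m'<d. \<gamma> k * ((if m' = m then 1 else 0) * ?F m' k m))"
    using j c c' by (intro sum.cong refl, subst mono_E6) auto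
  also have "\<dots> = (\<Sum>k<d. \<Sum>m<d. \<gamma> k * ?F m k m)"
    by (rule sum3_delta) auto
  also have "\<dots> = (if c' = c then (real d + 2) * \<gamma> j else \<gamma> j)"
  proof (cases "c' = c")
    case True
    have "(\<Sum>k<d. \<Sum>m<d. \<gamma> k * ?F m k m) =
       (\<Sum>k<d. \<Sum>m<d. (if j = m then if k = m then \<gamma> k else 0 else 0) + (if j = k then \<gamma> k else 0) +
           (if j = m then if m = k then \<gamma> k else 0 else 0))"
      using True by (intro sum.cong refl) auto
    also have "\<dots> = (\<Sum>k<d. \<Sum>m<d. (if j = m then if k = m then \<gamma> k else 0 else 0)) +
       (\<Sum>k<d. \<Sum>m<d. (if j = k then \<gamma> k else 0)) +
       (\<Sum>k<d. \<Sum>m<d. (if j = m then if m = k then \<gamma> k else 0 else 0))"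
      by (simp only: sum.distrib)
    also have "(\<Sum>k<d. \<Sum>m<d. (if j = m then if k = m then \<gamma> k else 0 else 0)) = \<gamma> j"
      using j by (simp add: delta_simps)
    also have "(\<Sum>k<d. \<Sum>m<d. (if j = k then \<gamma> k else (0::real))) = real d * \<gamma> j"
      using j by (simp add: delta_simps flip: sum_distrib_left)
    also have "(\<Sum>k<d. \<Sum>m<d. (if j = m then if m = k then \<gamma> k else 0 else 0)) = \<gamma> j"
      using j by (simp add: delta_simps)
    finally show ?thesis using True by (simp add: algebra_simps)
  next
    case False
    have "(\<Sum>k<d. \<Sum>m<d. \<gamma> k * ?F m k m) = (\<Sum>k<d. \<Sum>m<d. (if j = m then if k = m then \<gamma> k else 0 else 0))"
      using False by (intro sum.cong refl) auto
    also have "\<dots> = \<gamma> j" using j by (simp add: delta_simps)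
    finally show ?thesis using False by simp
  qed
  finally show ?thesis .
qed

lemma fm_PG: "finite_measure (PG I)"
  using prob_space.finite_measure[OF PG_prob] .

lemma gd_c: "i \<in> gauss_idx d n \<Longrightarrow> gd (PG (gauss_idx d n)) (\<lambda>\<omega>. \<omega> i)"
  by (rule gd_coord) auto

lemma gd_yv: "c < n \<Longrightarrow> gd (PG (gauss_idx d n)) (\<lambda>\<omega>. yv d \<omega> c)"
  unfolding yv_def by (intro gd_sum fm_PG gd_mult gd_c) auto

lemma gd_lin: "c < n \<Longrightarrow> gd (PG (gauss_idx d n)) (\<lambda>\<omega>. \<Sum>k<d. \<gamma> k * \<omega> (Inr (c, k)))"
  by (intro gd_sum fm_PG gd_mult gd_c gd_const) auto

lemma gd_Qf: "gd (PG (gauss_idx d n)) (Qf d n \<gamma>)"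
proof -
  have "gd (PG (gauss_idx d n)) (\<lambda>\<omega>. Qf d n \<gamma> \<omega>)"
    unfolding Qf_def by (intro gd_divide fm_PG gd_sum gd_mult gd_lin gd_yv) auto
  then show ?thesis by simp
qed

lemma Qf_ej: "Qf d n (\<lambda>k. if k = j then 1 else 0) \<omega> = (\<Sum>c<n. \<omega> (Inr (c, j)) * yv d \<omega> c) / real n"
  if "j < d"
proof -
  have "(\<Sum>k<d. (if k = j then 1 else 0) * \<omega> (Inr (c, k))) = \<omega> (Inr (c, j))" for c
  proof -
    have "(\<Sum>k<d. (if k = j then 1 else 0) * \<omega> (Inr (c, k))) = (\<Sum>k<d. if k = j then \<omega> (Inr (c, k)) else 0)"
      by (rule sum.cong) auto
    then show ?thesis using that by simp
  qed
  then show ?thesis unfolding Qf_def by simp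
qed

lemma K2:
  assumes j: "j < d" and n: "1 \<le> n"
  shows "(\<integral>\<omega>. Qf d n (\<lambda>k. if k = j then 1 else 0) \<omega> * Qf d n \<gamma> \<omega> \<partial>PG (gauss_idx d n)) =
     (real n + real d + 1) / real n * \<gamma> j"
proof -
  let ?A = "\<lambda>c' \<omega>. \<omega> (Inr (c', j)) * yv d \<omega> c'"
  let ?B = "\<lambda>c \<omega>. (\<Sum>k<d. \<gamma> k * \<omega> (Inr (c, k))) * yv d \<omega> c"
  have eq: "(\<lambda>\<omega>. Qf d n (\<lambda>k. if k = j then 1 else 0) \<omega> * Qf d n \<gamma> \<omega>) =
     (\<lambda>\<omega>. \<Sum>c'<n. (1 / real n ^ 2) * (\<Sum>c<n. 1 * (?A c' \<omega> * ?B c \<omega>)))"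
  proof
    fix \<omega>
    have "Qf d n (\<lambda>k. if k = j then 1 else 0) \<omega> * Qf d n \<gamma> \<omega> = ((\<Sum>c'<n. ?A c' \<omega>) * (\<Sum>c<n. ?B c \<omega>)) / real n ^ 2"
      unfolding Qf_ej[OF j] by (simp add: Qf_def power2_eq_square)
    also have "\<dots> = (\<Sum>c'<n. \<Sum>c<n. ?A c' \<omega> * ?B c \<omega>) / real n ^ 2"
      by (simp only: sum_product)
    also have "\<dots> = (\<Sum>c'<n. (\<Sum>c<n. ?A c' \<omega> * ?B c \<omega>) / real n ^ 2)"
      by (rule sum_divide_distrib)
    also have "\<dots> = (\<Sum>c'<n. (1 / real n ^ 2) * (\<Sum>c<n. 1 * (?A c' \<omega> * ?B c \<omega>)))"
      by (intro sum.cong refl) simp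
    finally show "Qf d n (\<lambda>k. if k = j then 1 else 0) \<omega> * Qf d n \<gamma> \<omega> = (\<Sum>c'<n. (1 / real n ^ 2) * (\<Sum>c<n. 1 * (?A c' \<omega> * ?B c \<omega>)))" .
  qed
  have iAB: "integrable (PG (gauss_idx d n)) (\<lambda>\<omega>. ?A c' \<omega> * ?B c \<omega>)" if "c < n" "c' < n" for c c'
    using that j by (intro gd_integrable gd_mult gd_c gd_yv gd_lin) auto
  have "(\<integral>\<omega>. Qf d n (\<lambda>k. if k = j then 1 else 0) \<omega> * Qf d n \<gamma> \<omega> \<partial>PG (gauss_idx d n)) =
     (\<Sum>c'<n. (1 / real n ^ 2) * (\<integral>\<omega>. (\<Sum>c<n. 1 * (?A c' \<omega> * ?B c \<omega>)) \<partial>PG (gauss_idx d n)))"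
    unfolding eq by (rule int_sum1) (use iAB in auto)
  also have "\<dots> = (\<Sum>c'<n. (1 / real n ^ 2) * (\<Sum>c<n. 1 * (\<integral>\<omega>. ?A c' \<omega> * ?B c \<omega> \<partial>PG (gauss_idx d n))))"
    by (intro sum.cong refl arg_cong2[where f="(*)"] int_sum1) (use iAB in auto)
  also have "\<dots> = (\<Sum>c'<n. (1 / real n ^ 2) * (\<Sum>c<n. (if c' = c then (real d + 2) * \<gamma> j else \<gamma> j)))"
    by (intro sum.cong refl arg_cong2[where f="(*)"]) (use j in \<open>simp add: E_pair\<close>)
  also have "\<dots> = (\<Sum>c'<n. (1 / real n ^ 2) * (real n * \<gamma> j + (real d + 1) * \<gamma> j))"
  proof (intro sum.cong refl arg_cong2[where f="(*)"])
    fix c' assume c': "c' \<in> {..<n}"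
    have "(\<Sum>c<n. (if c' = c then (real d + 2) * \<gamma> j else \<gamma> j)) = (\<Sum>c<n. \<gamma> j + (if c' = c then (real d + 1) * \<gamma> j else 0))"
      by (intro sum.cong refl) (auto simp: algebra_simps)
    also have "\<dots> = real n * \<gamma> j + (real d + 1) * \<gamma> j"
      using c' by (simp add: sum.distrib sum.delta)
    finally show "(\<Sum>c<n. (if c' = c then (real d + 2) * \<gamma> j else \<gamma> j)) = real n * \<gamma> j + (real d + 1) * \<gamma> j" .
  qed
  also have "\<dots> = (real n + real d + 1) / real n * \<gamma> j"
    using n by (simp add: power2_eq_square field_simps)
  finally show ?thesis .
qed



lemma Z0_last: "Z0 d n \<omega> q n = (if q = 2 * d + 1 then 1 else 0)"
  unfolding Z0_def by simp

lemma Z0_col: "c < n \<Longrightarrow> Z0 d n \<omega> p c =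
   (if p < d then \<omega> (Inr (c, p)) else if p = d then yv d \<omega> c else 0)"
  unfolding Z0_def yv_def by simp

lemma sum_split_d:
  fixes f :: "nat \<Rightarrow> real"
  assumes "\<And>p. d < p \<Longrightarrow> p < m \<Longrightarrow> f p = 0" "d < m"
  shows "(\<Sum>p<m. f p) = (\<Sum>p<d. f p) + f d"
proof -
  have "(\<Sum>p<m. f p) = (\<Sum>p<Suc d. f p)"
    by (rule sum.mono_neutral_right) (use assms in auto)
  then show ?thesis by simp
qed

lemma lsa_formula:
  "lsa_last d n V W (Z0 d n \<omega>) r =
     (if r = 2 * d + 1 then 1 else 0) +
     ((\<Sum>c<n. ((\<Sum>a<d. V r a * \<omega> (Inr (c, a))) + V r d * yv d \<omega> c) *
               ((\<Sum>p<d. \<omega> (Inr (c, p)) * W p (2 * d + 1)) + yv d \<omega> c * W d (2 * d + 1)))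
      + V r (2 * d + 1) * W (2 * d + 1) (2 * d + 1)) / real n"
proof -
  let ?Z = "Z0 d n \<omega>"
  let ?l = "2 * d + 1"
  have de: "emb_dim d = 2 * d + 2" unfolding emb_dim_def by simp
  define s where "s c = (\<Sum>p<emb_dim d. ?Z p c * W p ?l)" for c
  have inner: "(\<Sum>p<emb_dim d. \<Sum>q<emb_dim d. ?Z p c * W p q * ?Z q n) = s c" for c
  proof -
    have "(\<Sum>q<emb_dim d. ?Z p c * W p q * ?Z q n) = ?Z p c * W p ?l" for p
    proof -
      have "(\<Sum>q<emb_dim d. ?Z p c * W p q * ?Z q n) = (\<Sum>q<emb_dim d. if q = ?l then ?Z p c * W p q else 0)"
        by (rule sum.cong) (auto simp: Z0_last)
      also have "\<dots> = ?Z p c * W p ?l" by (simp add: de)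
      finally show ?thesis .
    qed
    then show ?thesis unfolding s_def by simp
  qed
  have s_lt: "s c = (\<Sum>p<d. \<omega> (Inr (c, p)) * W p ?l) + yv d \<omega> c * W d ?l" if "c < n" for c
  proof -
    have "s c = (\<Sum>p<d. ?Z p c * W p ?l) + ?Z d c * W d ?l"
      unfolding s_def de by (rule sum_split_d) (use that in \<open>auto simp: Z0_col\<close>)
    also have "(\<Sum>p<d. ?Z p c * W p ?l) = (\<Sum>p<d. \<omega> (Inr (c, p)) * W p ?l)"
      by (rule sum.cong) (use that in \<open>auto simp: Z0_col\<close>)
    finally show ?thesis using that by (simp add: Z0_col)
  qed
  have s_n: "s n = W ?l ?l"
  proof -
    have "s n = (\<Sum>p<emb_dim d. if p = ?l then W p ?l else 0)"
      unfolding s_def by (rule sum.cong) (auto simp: Z0_last)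
    then show ?thesis by (simp add: de)
  qed
  have v_lt: "(\<Sum>a<emb_dim d. V r a * ?Z a c) = (\<Sum>a<d. V r a * \<omega> (Inr (c, a))) + V r d * yv d \<omega> c" if "c < n" for c
  proof -
    have "(\<Sum>a<emb_dim d. V r a * ?Z a c) = (\<Sum>a<d. V r a * ?Z a c) + V r d * ?Z d c"
      unfolding de by (rule sum_split_d) (use that in \<open>auto simp: Z0_col\<close>)
    also have "(\<Sum>a<d. V r a * ?Z a c) = (\<Sum>a<d. V r a * \<omega> (Inr (c, a)))"
      by (rule sum.cong) (use that in \<open>auto simp: Z0_col\<close>)
    finally show ?thesis using that by (simp add: Z0_col)
  qed
  have v_n: "(\<Sum>a<emb_dim d. V r a * ?Z a n) = V r ?l"
  proof -
    have "(\<Sum>a<emb_dim d. V r a * ?Z a n) = (\<Sum>a<emb_dim d. if a = ?l then V r a else 0)"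
      by (rule sum.cong) (auto simp: Z0_last)
    then show ?thesis by (simp add: de)
  qed
  have "(\<Sum>a<emb_dim d. V r a * (\<Sum>c\<le>n. ?Z a c * (\<Sum>p<emb_dim d. \<Sum>q<emb_dim d. ?Z p c * W p q * ?Z q n)))
      = (\<Sum>a<emb_dim d. \<Sum>c\<le>n. V r a * ?Z a c * s c)"
    by (simp only: inner) (simp add: sum_distrib_left mult.assoc)
  also have "\<dots> = (\<Sum>c\<le>n. (\<Sum>a<emb_dim d. V r a * ?Z a c) * s c)"
    by (subst sum.swap) (simp add: sum_distrib_right)
  also have "\<dots> = (\<Sum>c<n. (\<Sum>a<emb_dim d. V r a * ?Z a c) * s c) + V r ?l * W ?l ?l"
    by (simp add: lessThan_Suc_atMost[symmetric] v_n s_n)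
  also have "(\<Sum>c<n. (\<Sum>a<emb_dim d. V r a * ?Z a c) * s c) =
      (\<Sum>c<n. ((\<Sum>a<d. V r a * \<omega> (Inr (c, a))) + V r d * yv d \<omega> c) *
               ((\<Sum>p<d. \<omega> (Inr (c, p)) * W p ?l) + yv d \<omega> c * W d ?l))"
    by (rule sum.cong) (auto simp: v_lt s_lt)
  finally show ?thesis unfolding lsa_last_def by (simp add: Z0_last)
qed

definition sgi :: "nat + nat \<times> nat \<Rightarrow> real" where
  "sgi i = (case i of Inl _ \<Rightarrow> -1 | Inr _ \<Rightarrow> 1)"

definition fl :: "nat \<Rightarrow> nat \<Rightarrow> (nat + nat \<times> nat \<Rightarrow> real) \<Rightarrow> (nat + nat \<times> nat \<Rightarrow> real)" where
  "fl d n \<omega> = restrict (\<lambda>i. sgi i * \<omega> i) (gauss_idx d n)"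

lemma fl_Inl[simp]: "m < d \<Longrightarrow> fl d n \<omega> (Inl m) = - \<omega> (Inl m)"
  unfolding fl_def sgi_def by simp

lemma fl_Inr[simp]: "c < n \<Longrightarrow> k < d \<Longrightarrow> fl d n \<omega> (Inr (c, k)) = \<omega> (Inr (c, k))"
  unfolding fl_def sgi_def by simp

lemma yv_fl[simp]: "c < n \<Longrightarrow> yv d (fl d n \<omega>) c = - yv d \<omega> c"
  unfolding yv_def by (simp add: sum_negf[symmetric])

lemma Qf_fl: "Qf d n \<gamma> (fl d n \<omega>) = - Qf d n \<gamma> \<omega>"
proof -
  have "(\<Sum>c<n. (\<Sum>k<d. \<gamma> k * fl d n \<omega> (Inr (c, k))) * yv d (fl d n \<omega>) c) =
        (\<Sum>c<n. - ((\<Sum>k<d. \<gamma> k * \<omega> (Inr (c, k))) * yv d \<omega> c))"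
    by (intro sum.cong refl) auto
  then show ?thesis unfolding Qf_def by (simp add: sum_negf)
qed

lemma fl_reflect:
  fixes g :: "(nat + nat \<times> nat \<Rightarrow> real) \<Rightarrow> real"
  assumes "g \<in> borel_measurable (PG (gauss_idx d n))"
  shows "(\<integral>\<omega>. g \<omega> \<partial>PG (gauss_idx d n)) = (\<integral>\<omega>. g (fl d n \<omega>) \<partial>PG (gauss_idx d n))"
proof -
  have s: "\<And>i. sgi i = 1 \<or> sgi i = -1" unfolding sgi_def by (auto split: sum.split)
  show ?thesis unfolding fl_def using PG_reflect_integral[OF gi_finite s assms] .
qed

lemma P_fl_diff:
  fixes j d n :: nat
  defines "r \<equiv> d + 1 + j" and "l \<equiv> 2 * d + 1"
  shows "lsa_last d n V W (Z0 d n \<omega>) r - lsa_last d n V W (Z0 d n (fl d n \<omega>)) r =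
         2 * Qf d n (\<lambda>k. W d l * V r k + V r d * W k l) \<omega>"
proof -
  define u where "u c = (\<Sum>a<d. V r a * \<omega> (Inr (c, a)))" for c
  define a where "a c = (\<Sum>p<d. \<omega> (Inr (c, p)) * W p l)" for c
  define y where "y c = yv d \<omega> c" for c
  have fu: "(\<Sum>a<d. V r a * fl d n \<omega> (Inr (c, a))) = u c" if "c < n" for c
    unfolding u_def using that by (intro sum.cong refl) auto
  have fa: "(\<Sum>p<d. fl d n \<omega> (Inr (c, p)) * W p l) = a c" if "c < n" for c
    unfolding a_def using that by (intro sum.cong refl) auto
  have e1: "lsa_last d n V W (Z0 d n \<omega>) r = (if r = l then 1 else 0) +
     ((\<Sum>c<n. (u c + V r d * y c) * (a c + y c * W d l)) + V r l * W l l) / real n"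
    unfolding lsa_formula u_def a_def y_def l_def by simp
  have e2: "lsa_last d n V W (Z0 d n (fl d n \<omega>)) r = (if r = l then 1 else 0) +
     ((\<Sum>c<n. (u c - V r d * y c) * (a c - y c * W d l)) + V r l * W l l) / real n"
  proof -
    have "(\<Sum>c<n. ((\<Sum>a<d. V r a * fl d n \<omega> (Inr (c, a))) + V r d * yv d (fl d n \<omega>) c) *
               ((\<Sum>p<d. fl d n \<omega> (Inr (c, p)) * W p l) + yv d (fl d n \<omega>) c * W d l)) =
          (\<Sum>c<n. (u c - V r d * y c) * (a c - y c * W d l))"
      by (intro sum.cong refl) (simp add: u_def a_def y_def)
    then show ?thesis unfolding lsa_formula l_def by simp
  qed
  have kq: "(\<Sum>k<d. (W d l * V r k + V r d * W k l) * \<omega> (Inr (c, k))) = W d l * u c + V r d * a c" for c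
    unfolding u_def a_def by (simp add: sum.distrib sum_distrib_left algebra_simps)
  have "lsa_last d n V W (Z0 d n \<omega>) r - lsa_last d n V W (Z0 d n (fl d n \<omega>)) r =
     ((\<Sum>c<n. (u c + V r d * y c) * (a c + y c * W d l)) - (\<Sum>c<n. (u c - V r d * y c) * (a c - y c * W d l))) / real n"
    unfolding e1 e2 by (simp add: add_divide_distrib diff_divide_distrib)
  also have "\<dots> = (\<Sum>c<n. 2 * ((W d l * u c + V r d * a c) * y c)) / real n"
    by (simp only: sum_subtractf[symmetric]) (intro arg_cong2[where f="(/)"] sum.cong refl, simp add: algebra_simps)
  also have "\<dots> = 2 * Qf d n (\<lambda>k. W d l * V r k + V r d * W k l) \<omega>"
    unfolding Qf_def kq y_def by (simp add: sum_distrib_left[symmetric])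
  finally show ?thesis .
qed



definition rho :: "nat \<Rightarrow> nat \<Rightarrow> real" where
  "rho d n = real n / (real n + real d + 1)"

definition Tf :: "nat \<Rightarrow> nat \<Rightarrow> nat \<Rightarrow> (nat + nat \<times> nat \<Rightarrow> real) \<Rightarrow> real" where
  "Tf d n j \<omega> = \<omega> (Inl j) - rho d n * Qf d n (\<lambda>k. if k = j then 1 else 0) \<omega>"

lemma gd_T: "j < d \<Longrightarrow> gd (PG (gauss_idx d n)) (Tf d n j)"
proof -
  assume j: "j < d"
  have "gd (PG (gauss_idx d n)) (\<lambda>\<omega>. \<omega> (Inl j) - rho d n * Qf d n (\<lambda>k. if k = j then 1 else 0) \<omega>)"
    using j by (intro gd_diff gd_cmult fm_PG gd_c gd_Qf) auto
  then show ?thesis unfolding Tf_def .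
qed

lemma gd_P: "gd (PG (gauss_idx d n)) (\<lambda>\<omega>. lsa_last d n V W (Z0 d n \<omega>) r)"
  unfolding lsa_formula
  by (intro gd_add gd_divide gd_sum gd_mult gd_const gd_c gd_yv fm_PG) auto

lemma Tf_fl: "j < d \<Longrightarrow> Tf d n j (fl d n \<omega>) = - Tf d n j \<omega>"
  unfolding Tf_def by (simp add: Qf_fl)

lemma ET_Q:
  assumes j: "j < d" and n: "1 \<le> n"
  shows "(\<integral>\<omega>. Tf d n j \<omega> * Qf d n \<gamma> \<omega> \<partial>PG (gauss_idx d n)) = 0"
proof -
  have i1: "integrable (PG (gauss_idx d n)) (\<lambda>\<omega>. \<omega> (Inl j) * Qf d n \<gamma> \<omega>)"
    using j by (intro gd_integrable gd_mult gd_c gd_Qf) auto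
  have i2: "integrable (PG (gauss_idx d n)) (\<lambda>\<omega>. Qf d n (\<lambda>k. if k = j then 1 else 0) \<omega> * Qf d n \<gamma> \<omega>)"
    by (intro gd_integrable gd_mult gd_Qf)
  have "(\<integral>\<omega>. Tf d n j \<omega> * Qf d n \<gamma> \<omega> \<partial>PG (gauss_idx d n)) =
     (\<integral>\<omega>. \<omega> (Inl j) * Qf d n \<gamma> \<omega> - rho d n * (Qf d n (\<lambda>k. if k = j then 1 else 0) \<omega> * Qf d n \<gamma> \<omega>) \<partial>PG (gauss_idx d n))"
    unfolding Tf_def by (simp add: algebra_simps)
  also have "\<dots> = \<gamma> j - rho d n * ((real n + real d + 1) / real n * \<gamma> j)"
    using i1 i2 by (simp add: K1[OF j n] K2[OF j n])
  also have "\<dots> = \<gamma> j - (rho d n * ((real n + real d + 1) / real n)) * \<gamma> j" by simp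
  also have "rho d n * ((real n + real d + 1) / real n) = 1"
  proof -
    have pos: "real n + real d + 1 > 0" "real n > 0" using n by auto
    have "rho d n * ((real n + real d + 1) / real n) = (real n * (real n + real d + 1)) / ((real n + real d + 1) * real n)"
      unfolding rho_def by simp
    also have "\<dots> = 1" using pos by simp
    finally show ?thesis .
  qed
  finally show ?thesis by simp
qed


lemma EW2: "j < d \<Longrightarrow> (\<integral>\<omega>. \<omega> (Inl j) * \<omega> (Inl j) \<partial>PG (gauss_idx d n)) = 1"
  by (subst mono_E2) auto

lemma ET_W:
  assumes j: "j < d" and n: "1 \<le> n"
  shows "(\<integral>\<omega>. Tf d n j \<omega> * \<omega> (Inl j) \<partial>PG (gauss_idx d n)) = 1 - rho d n"
proof -
  have i1: "integrable (PG (gauss_idx d n)) (\<lambda>\<omega>. \<omega> (Inl j) * \<omega> (Inl j))"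
    using j by (intro gd_integrable gd_mult gd_c) auto
  have i2: "integrable (PG (gauss_idx d n)) (\<lambda>\<omega>. \<omega> (Inl j) * Qf d n (\<lambda>k. if k = j then 1 else 0) \<omega>)"
    using j by (intro gd_integrable gd_mult gd_c gd_Qf) auto
  have "(\<integral>\<omega>. Tf d n j \<omega> * \<omega> (Inl j) \<partial>PG (gauss_idx d n)) =
     (\<integral>\<omega>. \<omega> (Inl j) * \<omega> (Inl j) - rho d n * (\<omega> (Inl j) * Qf d n (\<lambda>k. if k = j then 1 else 0) \<omega>) \<partial>PG (gauss_idx d n))"
    unfolding Tf_def by (simp add: algebra_simps)
  also have "\<dots> = 1 - rho d n"
    using i1 i2 j by (simp add: K1[OF j n] EW2)
  finally show ?thesis .
qed

lemma ET_T:
  assumes j: "j < d" and n: "1 \<le> n"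
  shows "(\<integral>\<omega>. Tf d n j \<omega> * Tf d n j \<omega> \<partial>PG (gauss_idx d n)) = 1 - rho d n"
proof -
  have i1: "integrable (PG (gauss_idx d n)) (\<lambda>\<omega>. Tf d n j \<omega> * \<omega> (Inl j))"
    using j by (intro gd_integrable gd_mult gd_c gd_T) auto
  have i2: "integrable (PG (gauss_idx d n)) (\<lambda>\<omega>. Tf d n j \<omega> * Qf d n (\<lambda>k. if k = j then 1 else 0) \<omega>)"
    using j by (intro gd_integrable gd_mult gd_T gd_Qf) auto
  have "(\<integral>\<omega>. Tf d n j \<omega> * Tf d n j \<omega> \<partial>PG (gauss_idx d n)) =
     (\<integral>\<omega>. Tf d n j \<omega> * \<omega> (Inl j) - rho d n * (Tf d n j \<omega> * Qf d n (\<lambda>k. if k = j then 1 else 0) \<omega>) \<partial>PG (gauss_idx d n))"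
    by (rule Bochner_Integration.integral_cong) (auto simp: Tf_def[of d n j] algebra_simps)
  also have "\<dots> = 1 - rho d n"
    using i1 i2 j by (simp add: ET_W[OF j n] ET_Q[OF j n])
  finally show ?thesis .
qed

lemma ET_P:
  assumes j: "j < d" and n: "1 \<le> n"
  shows "(\<integral>\<omega>. Tf d n j \<omega> * lsa_last d n V W (Z0 d n \<omega>) (d + 1 + j) \<partial>PG (gauss_idx d n)) = 0"
proof -
  let ?P = "\<lambda>\<omega>. lsa_last d n V W (Z0 d n \<omega>) (d + 1 + j)"
  let ?Q = "Qf d n (\<lambda>k. W d (2 * d + 1) * V (d + 1 + j) k + V (d + 1 + j) d * W k (2 * d + 1))"
  let ?M = "PG (gauss_idx d n)"
  have gTP: "gd ?M (\<lambda>\<omega>. Tf d n j \<omega> * ?P \<omega>)"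
    using j by (intro gd_mult gd_T gd_P)
  have iTP: "integrable ?M (\<lambda>\<omega>. Tf d n j \<omega> * ?P \<omega>)" using gTP by (rule gd_integrable)
  have iTQ: "integrable ?M (\<lambda>\<omega>. Tf d n j \<omega> * ?Q \<omega>)"
    using j by (intro gd_integrable gd_mult gd_T gd_Qf)
  have "(\<integral>\<omega>. Tf d n j \<omega> * ?P \<omega> \<partial>?M) = (\<integral>\<omega>. Tf d n j (fl d n \<omega>) * ?P (fl d n \<omega>) \<partial>?M)"
    by (rule fl_reflect) (rule gd_meas[OF gTP])
  also have "\<dots> = (\<integral>\<omega>. 2 * (Tf d n j \<omega> * ?Q \<omega>) - Tf d n j \<omega> * ?P \<omega> \<partial>?M)"
  proof (rule Bochner_Integration.integral_cong[OF refl])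
    fix \<omega>
    have e: "?P (fl d n \<omega>) = ?P \<omega> - 2 * ?Q \<omega>" using P_fl_diff[where j=j and d=d and n=n and V=V and W=W and \<omega>=\<omega>] by simp
    show "Tf d n j (fl d n \<omega>) * ?P (fl d n \<omega>) = 2 * (Tf d n j \<omega> * ?Q \<omega>) - Tf d n j \<omega> * ?P \<omega>"
      unfolding e Tf_fl[OF j] by (simp add: algebra_simps)
  qed
  also have "\<dots> = 2 * (\<integral>\<omega>. Tf d n j \<omega> * ?Q \<omega> \<partial>?M) - (\<integral>\<omega>. Tf d n j \<omega> * ?P \<omega> \<partial>?M)"
    using iTP iTQ by simp
  finally show ?thesis using ET_Q[OF j n] by simp
qed

lemma row_bound:
  assumes j: "j < d" and n: "1 \<le> n"
  shows "(\<integral>\<omega>. (lsa_last d n V W (Z0 d n \<omega>) (d + 1 + j) - \<omega> (Inl j))\<^sup>2 \<partial>PG (gauss_idx d n)) \<ge> 1 - rho d n"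
proof -
  let ?P = "\<lambda>\<omega>. lsa_last d n V W (Z0 d n \<omega>) (d + 1 + j)"
  let ?T = "Tf d n j"
  let ?M = "PG (gauss_idx d n)"
  have gP: "gd ?M ?P" by (rule gd_P)
  have gW: "gd ?M (\<lambda>\<omega>. \<omega> (Inl j))" using j by (intro gd_c) auto
  have gT: "gd ?M ?T" using j by (rule gd_T)
  have i1: "integrable ?M (\<lambda>\<omega>. (?P \<omega> - \<omega> (Inl j))\<^sup>2)"
    unfolding power2_eq_square by (intro gd_integrable gd_mult gd_diff gP gW)
  have i2: "integrable ?M (\<lambda>\<omega>. ?T \<omega> * ?P \<omega>)" by (intro gd_integrable gd_mult gP gT)
  have i3: "integrable ?M (\<lambda>\<omega>. ?T \<omega> * \<omega> (Inl j))" by (intro gd_integrable gd_mult gW gT)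
  have i4: "integrable ?M (\<lambda>\<omega>. ?T \<omega> * ?T \<omega>)" by (intro gd_integrable gd_mult gT)
  have "0 \<le> (\<integral>\<omega>. (?P \<omega> - \<omega> (Inl j) + ?T \<omega>)\<^sup>2 \<partial>?M)" by simp
  also have "\<dots> = (\<integral>\<omega>. (?P \<omega> - \<omega> (Inl j))\<^sup>2 + 2 * (?T \<omega> * ?P \<omega>) - 2 * (?T \<omega> * \<omega> (Inl j)) + ?T \<omega> * ?T \<omega> \<partial>?M)"
    by (rule Bochner_Integration.integral_cong[OF refl]) (simp add: power2_eq_square algebra_simps)
  also have "\<dots> = (\<integral>\<omega>. (?P \<omega> - \<omega> (Inl j))\<^sup>2 \<partial>?M) + 2 * (\<integral>\<omega>. ?T \<omega> * ?P \<omega> \<partial>?M)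
        - 2 * (\<integral>\<omega>. ?T \<omega> * \<omega> (Inl j) \<partial>?M) + (\<integral>\<omega>. ?T \<omega> * ?T \<omega> \<partial>?M)"
    using i1 i2 i3 i4 by simp
  also have "\<dots> = (\<integral>\<omega>. (?P \<omega> - \<omega> (Inl j))\<^sup>2 \<partial>?M) - (1 - rho d n)"
    using ET_P[OF j n] ET_W[OF j n] ET_T[OF j n] by simp
  finally show ?thesis by simp
qed



lemma gd_tgt: "gd (PG (gauss_idx d n)) (\<lambda>\<omega>. target_last d \<omega> r)"
  unfolding target_last_def
  by (cases "d < r \<and> r \<le> 2 * d") (auto intro!: gd_c gd_const fm_PG)

lemma shift_sum_le:
  fixes h :: "nat \<Rightarrow> real"
  assumes "\<And>r. 0 \<le> h r"
  shows "(\<Sum>j<d. h (d + 1 + j)) \<le> (\<Sum>r<2 * d + 2. h r)"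
proof -
  have "(\<Sum>j<d. h (d + 1 + j)) = (\<Sum>r\<in>(\<lambda>j. d + 1 + j) ` {..<d}. h r)"
    by (subst sum.reindex) (auto simp: inj_on_def)
  also have "\<dots> \<le> (\<Sum>r<2 * d + 2. h r)"
    by (rule sum_mono2) (use assms in auto)
  finally show ?thesis .
qed

lemma loss_lower:
  assumes d: "1 \<le> d" and n: "1 \<le> n"
  shows "eval_loss d n V W \<ge> real d * (real d + 1) / (2 * (real n + real d + 1))"
proof -
  let ?M = "PG (gauss_idx d n)"
  let ?h = "\<lambda>\<omega> r. (lsa_last d n V W (Z0 d n \<omega>) r - target_last d \<omega> r)\<^sup>2"
  have de: "emb_dim d = 2 * d + 2" unfolding emb_dim_def by simp
  have gF: "gd ?M (\<lambda>\<omega>. \<Sum>r<emb_dim d. ?h \<omega> r)"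
    unfolding power2_eq_square by (intro gd_sum fm_PG gd_mult gd_diff gd_P gd_tgt)
  have gG: "gd ?M (\<lambda>\<omega>. (lsa_last d n V W (Z0 d n \<omega>) (d + 1 + j) - \<omega> (Inl j))\<^sup>2)" if "j < d" for j
    unfolding power2_eq_square using that by (intro gd_mult gd_diff gd_P gd_c) auto
  have tg: "target_last d \<omega> (Suc (d + j)) = \<omega> (Inl j)" if "j < d" for j \<omega>
    using that unfolding target_last_def by auto
  have "(\<integral>\<omega>. (\<Sum>j<d. (lsa_last d n V W (Z0 d n \<omega>) (d + 1 + j) - \<omega> (Inl j))\<^sup>2) \<partial>?M)
      \<le> (\<integral>\<omega>. (\<Sum>r<emb_dim d. ?h \<omega> r) \<partial>?M)"
  proof (rule integral_mono)
    show "integrable ?M (\<lambda>\<omega>. \<Sum>j<d. (lsa_last d n V W (Z0 d n \<omega>) (d + 1 + j) - \<omega> (Inl j))\<^sup>2)"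
      by (rule Bochner_Integration.integrable_sum) (use gG in \<open>auto intro: gd_integrable\<close>)
    show "integrable ?M (\<lambda>\<omega>. \<Sum>r<emb_dim d. ?h \<omega> r)" using gF by (rule gd_integrable)
    fix \<omega>
    have "(\<Sum>j<d. (lsa_last d n V W (Z0 d n \<omega>) (d + 1 + j) - \<omega> (Inl j))\<^sup>2) = (\<Sum>j<d. ?h \<omega> (d + 1 + j))"
      by (intro sum.cong refl) (simp add: tg)
    also have "\<dots> \<le> (\<Sum>r<2 * d + 2. ?h \<omega> r)" by (rule shift_sum_le) simp
    finally show "(\<Sum>j<d. (lsa_last d n V W (Z0 d n \<omega>) (d + 1 + j) - \<omega> (Inl j))\<^sup>2) \<le> (\<Sum>r<emb_dim d. ?h \<omega> r)"
      by (simp add: de)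
  qed
  moreover have "(\<integral>\<omega>. (\<Sum>j<d. (lsa_last d n V W (Z0 d n \<omega>) (d + 1 + j) - \<omega> (Inl j))\<^sup>2) \<partial>?M)
      = (\<Sum>j<d. (\<integral>\<omega>. (lsa_last d n V W (Z0 d n \<omega>) (d + 1 + j) - \<omega> (Inl j))\<^sup>2 \<partial>?M))"
    by (rule Bochner_Integration.integral_sum) (use gG gd_integrable in auto)
  moreover have "(\<Sum>j<d. (\<integral>\<omega>. (lsa_last d n V W (Z0 d n \<omega>) (d + 1 + j) - \<omega> (Inl j))\<^sup>2 \<partial>?M)) \<ge> (\<Sum>j<d. 1 - rho d n)"
    by (rule sum_mono) (use row_bound n in auto)
  moreover have "(\<Sum>j<d. 1 - rho d n) = real d * ((real d + 1) / (real n + real d + 1))"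
  proof -
    have "1 - rho d n = (real d + 1) / (real n + real d + 1)"
      unfolding rho_def by (simp add: field_simps)
    then show ?thesis by simp
  qed
  ultimately have "(\<integral>\<omega>. (\<Sum>r<emb_dim d. ?h \<omega> r) \<partial>?M) \<ge> real d * ((real d + 1) / (real n + real d + 1))"
    by linarith
  then have "(1/2) * (\<integral>\<omega>. (\<Sum>r<emb_dim d. ?h \<omega> r) \<partial>?M) \<ge> (1/2) * (real d * ((real d + 1) / (real n + real d + 1)))"
    by linarith
  moreover have "(1/2) * (real d * ((real d + 1) / (real n + real d + 1))) = real d * (real d + 1) / (2 * (real n + real d + 1))"
    by simp
  ultimately show ?thesis unfolding eval_loss_def dm_eq by simp
qed

lemma loss_zero:
  shows "eval_loss d n (\<lambda>_ _. 0) (\<lambda>_ _. 0) = real d / 2"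
proof -
  let ?M = "PG (gauss_idx d n)"
  have de: "emb_dim d = 2 * d + 2" unfolding emb_dim_def by simp
  let ?g = "\<lambda>\<omega> r. if d < r \<and> r \<le> 2 * d then (\<omega> (Inl (r - d - 1)))\<^sup>2 else 0"
  have pt: "(\<Sum>r<emb_dim d. (lsa_last d n (\<lambda>_ _. 0) (\<lambda>_ _. 0) (Z0 d n \<omega>) r - target_last d \<omega> r)\<^sup>2)
      = (\<Sum>r<2 * d + 2. ?g \<omega> r)" for \<omega>
    unfolding de by (intro sum.cong refl) (auto simp: lsa_last_def Z0_last target_last_def)
  have re: "(\<Sum>r<2 * d + 2. ?g \<omega> r) = (\<Sum>j<d. (\<omega> (Inl j))\<^sup>2)" for \<omega>
  proof -
    have "(\<Sum>j<d. (\<omega> (Inl j))\<^sup>2) = (\<Sum>j<d. ?g \<omega> (d + 1 + j))" by (intro sum.cong refl) auto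
    also have "\<dots> = (\<Sum>r\<in>(\<lambda>j. d + 1 + j) ` {..<d}. ?g \<omega> r)"
      by (subst sum.reindex) (auto simp: inj_on_def)
    also have "\<dots> = (\<Sum>r<2 * d + 2. ?g \<omega> r)"
    proof (rule sum.mono_neutral_left)
      show "\<forall>i\<in>{..<2 * d + 2} - (\<lambda>j. d + 1 + j) ` {..<d}. ?g \<omega> i = 0"
      proof
        fix i assume i: "i \<in> {..<2 * d + 2} - (\<lambda>j. d + 1 + j) ` {..<d}"
        have "\<not> (d < i \<and> i \<le> 2 * d)"
        proof
          assume "d < i \<and> i \<le> 2 * d"
          then have "i = d + 1 + (i - d - 1)" "i - d - 1 < d" by auto
          then show False using i by blast
        qed
        then show "?g \<omega> i = 0" by auto
      qed
    qed auto
    finally show ?thesis ..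
  qed
  have "(\<integral>\<omega>. (\<Sum>j<d. (\<omega> (Inl j))\<^sup>2) \<partial>?M) = (\<Sum>j<d. (\<integral>\<omega>. \<omega> (Inl j) * \<omega> (Inl j) \<partial>?M))"
    unfolding power2_eq_square by (rule Bochner_Integration.integral_sum) (auto intro!: gd_integrable gd_mult gd_c)
  also have "\<dots> = real d" by (simp add: EW2)
  finally show ?thesis unfolding eval_loss_def dm_eq pt re by simp
qed



lemma lim_aux: "filterlim (\<lambda>d::nat. real d / ln (real d) ^ k) at_top sequentially"
proof -
  have 1: "((\<lambda>x::real. ln x ^ k / exp (ln x)) \<longlongrightarrow> 0) at_top"
    by (rule filterlim_compose[OF tendsto_power_div_exp_0 ln_at_top])
  have 2: "((\<lambda>x::real. ln x ^ k / x) \<longlongrightarrow> 0) at_top"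
  proof (rule Lim_transform_eventually[OF 1])
    show "\<forall>\<^sub>F x in at_top. ln x ^ k / exp (ln x) = ln x ^ k / (x::real)"
      using eventually_gt_at_top[of "0::real"] by eventually_elim simp
  qed
  have 3: "((\<lambda>d::nat. ln (real d) ^ k / real d) \<longlongrightarrow> 0) sequentially"
    by (rule filterlim_compose[OF 2 filterlim_real_sequentially])
  have 4: "\<forall>\<^sub>F d in sequentially. 0 < ln (real d) ^ k / real d"
    using eventually_ge_at_top[of "2::nat"] by eventually_elim simp
  have "filterlim (\<lambda>d. inverse (ln (real d) ^ k / real d)) at_top sequentially"
    by (rule filterlim_inverse_at_top[OF 3 4])
  then show ?thesis by simp
qed

lemma ln_ge1: "3 \<le> d \<Longrightarrow> 1 \<le> ln (real d)"
proof -
  assume d: "3 \<le> d"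
  then have "exp 1 \<le> real d" using exp_le by linarith
  then have "ln (exp 1) \<le> ln (real d)" using d by (subst ln_le_cancel_iff) auto
  then show ?thesis by simp
qed

lemma part1_ineq:
  assumes "1 \<le> x" "x \<le> (y::real)"
  shows "1 / 6 * x ^ 2 / y \<le> x * (x + 1) / (2 * (y + x + 1))"
proof -
  have y: "0 < y" using assms by auto
  have w: "0 < 2 * (y + x + 1)" using assms y by auto
  have h1: "x * x * x \<le> x * x * y" using assms by (intro mult_left_mono) auto
  have h2: "x * x \<le> x * y" using assms by (intro mult_left_mono) auto
  have poly: "x ^ 2 * (2 * (y + x + 1)) \<le> (x * (x + 1)) * (6 * y)"
  proof -
    have e1: "x ^ 2 * (2 * (y + x + 1)) = 2 * (x * x * y) + 2 * (x * x * x) + 2 * (x * x)"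
      by (simp add: power2_eq_square algebra_simps)
    have e2: "(x * (x + 1)) * (6 * y) = 6 * (x * x * y) + 6 * (x * y)"
      by (simp add: algebra_simps)
    have n1: "0 \<le> x * x * y" "0 \<le> x * y" using assms by auto
    show ?thesis unfolding e1 e2 using h1 h2 n1 by linarith
  qed
  have "1 / 6 * x ^ 2 / y = x ^ 2 * (2 * (y + x + 1)) / ((6 * y) * (2 * (y + x + 1)))"
    using w by simp
  also have "\<dots> \<le> (x * (x + 1)) * (6 * y) / ((6 * y) * (2 * (y + x + 1)))"
    using poly y w by (intro divide_right_mono) auto
  also have "\<dots> = x * (x + 1) / (2 * (y + x + 1))"
    using y by simp
  finally show ?thesis .
qed

lemma part2_low:
  fixes C2 :: real and Nr :: nat
  assumes d: "3 \<le> d" and C2: "0 < C2" and N1: "1 \<le> Nr"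
    and Nb: "real Nr \<le> C2 * real d * ln (real d) ^ k"
  shows "eval_loss d Nr V W \<ge> 1 / (2 * (C2 + 2)) * real d / ln (real d) ^ k"
proof -
  let ?L = "ln (real d) ^ k"
  have L1: "1 \<le> ?L" using ln_ge1[OF d] by (rule one_le_power)
  have dpos: "0 < real d" using d by auto
  have low: "eval_loss d Nr V W \<ge> real d * (real d + 1) / (2 * (real Nr + real d + 1))"
    using loss_lower[of d Nr V W] d N1 by auto
  have s1: "real d + 1 \<le> 2 * real d * ?L"
  proof -
    have "real d + 1 \<le> 2 * real d" using d by auto
    also have "\<dots> \<le> 2 * real d * ?L" using L1 dpos by simp
    finally show ?thesis .
  qed
  have sum_le: "2 * (real Nr + real d + 1) \<le> 2 * ((C2 + 2) * real d * ?L)"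
    using Nb s1 by (simp add: algebra_simps)
  have pos1: "0 < 2 * (real Nr + real d + 1)" by simp
  have "real d * (real d + 1) / (2 * ((C2 + 2) * real d * ?L)) \<le> real d * (real d + 1) / (2 * (real Nr + real d + 1))"
    by (rule divide_left_mono[OF sum_le]) (use pos1 sum_le C2 dpos L1 in auto)
  moreover have "1 / (2 * (C2 + 2)) * real d / ?L \<le> real d * (real d + 1) / (2 * ((C2 + 2) * real d * ?L))"
  proof -
    have "1 / (2 * (C2 + 2)) * real d / ?L = real d / (2 * (C2 + 2) * ?L)" by simp
    also have "\<dots> \<le> (real d + 1) / (2 * (C2 + 2) * ?L)"
      using C2 L1 by (intro divide_right_mono) auto
    also have "\<dots> = (real d * (real d + 1)) / (real d * (2 * (C2 + 2) * ?L))"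
      using dpos by (intro mult_divide_mult_cancel_left[symmetric]) simp
    also have "\<dots> = real d * (real d + 1) / (2 * ((C2 + 2) * real d * ?L))"
      by (simp add: ac_simps)
    finally show ?thesis .
  qed
  ultimately show ?thesis using low by linarith
qed

lemma opt_upper:
  assumes d: "3 \<le> d" and N1: "1 \<le> Nr"
  shows "opt_eval_loss d Nr \<le> 1 * real d * ln (real d) ^ k"
proof -
  have L1: "1 \<le> ln (real d) ^ k" using ln_ge1[OF d] by (rule one_le_power)
  have bdd: "bdd_below ((\<lambda>VW. eval_loss d Nr (fst VW) (snd VW)) ` UNIV)"
  proof (rule bdd_belowI2)
    fix VW :: "(nat \<Rightarrow> nat \<Rightarrow> real) \<times> (nat \<Rightarrow> nat \<Rightarrow> real)"
    have "0 \<le> real d * (real d + 1) / (2 * (real Nr + real d + 1))" by simp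
    also have "\<dots> \<le> eval_loss d Nr (fst VW) (snd VW)" using loss_lower d N1 by auto
    finally show "0 \<le> eval_loss d Nr (fst VW) (snd VW)" .
  qed
  have "opt_eval_loss d Nr \<le> eval_loss d Nr (\<lambda>_ _. 0) (\<lambda>_ _. 0)"
    using cINF_lower[OF bdd, of "((\<lambda>_ _. 0::real), (\<lambda>_ _. 0::real))"] unfolding opt_eval_loss_def by simp
  also have "\<dots> = real d / 2" by (simp add: loss_zero)
  also have "\<dots> \<le> 1 * real d * ln (real d) ^ k" using L1 d
    by (simp add: mult_le_cancel_left1 order_trans[of _ "real d"])
  finally show ?thesis .
qed

lemma opt_lower:
  assumes "\<And>V W. c \<le> eval_loss d Nr V W"
  shows "c \<le> opt_eval_loss d Nr"
  unfolding opt_eval_loss_def by (rule cINF_greatest) (use assms in auto)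

lemma part1:
  "\<forall>d n V W. 1 \<le> d \<and> d \<le> n \<longrightarrow> eval_loss d n V W \<ge> 1 / 6 * real d ^ 2 / real n"
proof (intro allI impI)
  fix d n :: nat and V W :: "nat \<Rightarrow> nat \<Rightarrow> real"
  assume a: "1 \<le> d \<and> d \<le> n"
  have "1 / 6 * real d ^ 2 / real n \<le> real d * (real d + 1) / (2 * (real n + real d + 1))"
    using a by (intro part1_ineq) auto
  also have "\<dots> \<le> eval_loss d n V W" using loss_lower[of d n V W] a by auto
  finally show "1 / 6 * real d ^ 2 / real n \<le> eval_loss d n V W" .
qed

lemma part2:
  fixes N :: "nat \<Rightarrow> nat" and C1 C2 :: real and k :: nat
  assumes H: "C1 > 0 \<and> C2 > 0 \<and> (\<forall>d. N d \<ge> 1) \<and>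
              (\<forall>\<^sub>F d in at_top. C1 * real d / ln (real d) ^ k \<le> real (N d)
                                 \<and> real (N d) \<le> C2 * real d * ln (real d) ^ k)"
  shows "(\<exists>c' C' k'. c' > 0 \<and> C' > 0 \<and>
                     (\<forall>\<^sub>F d in at_top. (\<forall>V W. eval_loss d (N d) V W \<ge> c' * real d / ln (real d) ^ k')
                                     \<and> opt_eval_loss d (N d) \<le> C' * real d * ln (real d) ^ k'))
                  \<and> filterlim (\<lambda>d. opt_eval_loss d (N d)) at_top at_top"
proof -
  from H have C2: "0 < C2" and N1: "\<And>d. 1 \<le> N d" by auto
  define c' where "c' = 1 / (2 * (C2 + 2))"
  have c'pos: "0 < c'" unfolding c'_def using C2 by simp
  have ev: "\<forall>\<^sub>F d in at_top. 3 \<le> d \<and> real (N d) \<le> C2 * real d * ln (real d) ^ k"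
  proof -
    have e2: "\<forall>\<^sub>F d in at_top. C1 * real d / ln (real d) ^ k \<le> real (N d) \<and> real (N d) \<le> C2 * real d * ln (real d) ^ k"
      using H by blast
    show ?thesis using eventually_conj[OF eventually_ge_at_top[of "3::nat"] e2] by (rule eventually_mono) auto
  qed
  have ev2: "\<forall>\<^sub>F d in at_top. (\<forall>V W. eval_loss d (N d) V W \<ge> c' * real d / ln (real d) ^ k)
                 \<and> opt_eval_loss d (N d) \<le> 1 * real d * ln (real d) ^ k"
    using ev
  proof eventually_elim
    case (elim d)
    then show ?case unfolding c'_def using part2_low[OF _ C2 N1] opt_upper[OF _ N1] by auto
  qed
  have ev3: "\<forall>\<^sub>F d in at_top. c' * real d / ln (real d) ^ k \<le> opt_eval_loss d (N d)"
    using ev2 by eventually_elim (auto intro: opt_lower)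
  have lim: "filterlim (\<lambda>d::nat. c' * real d / ln (real d) ^ k) at_top at_top"
  proof -
    have "filterlim (\<lambda>d::nat. c' * (real d / ln (real d) ^ k)) at_top sequentially"
      by (rule filterlim_tendsto_pos_mult_at_top[OF tendsto_const c'pos lim_aux])
    then show ?thesis by simp
  qed
  have A: "\<exists>c' C' k'. c' > 0 \<and> C' > 0 \<and>
                     (\<forall>\<^sub>F d in at_top. (\<forall>V W. eval_loss d (N d) V W \<ge> c' * real d / ln (real d) ^ k')
                                     \<and> opt_eval_loss d (N d) \<le> C' * real d * ln (real d) ^ k')"
    using c'pos ev2 by (intro exI[of _ c'] exI[of _ "1::real"] exI[of _ k]) auto
  have B: "filterlim (\<lambda>d. opt_eval_loss d (N d)) at_top at_top"
    by (rule filterlim_at_top_mono[OF lim ev3])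
  show ?thesis using A B by blast
qed

theorem corollary3p2:
  shows "\<exists>c>0. (\<forall>d n V W. 1 \<le> d \<and> d \<le> n \<longrightarrow>
                    eval_loss d n V W \<ge> c * real d ^ 2 / real n)
        \<and> (\<forall>(N :: nat \<Rightarrow> nat) (C1::real) (C2::real) (k::nat).
              C1 > 0 \<and> C2 > 0 \<and> (\<forall>d. N d \<ge> 1) \<and>
              (\<forall>\<^sub>F d in at_top. C1 * real d / ln (real d) ^ k \<le> real (N d)
                                 \<and> real (N d) \<le> C2 * real d * ln (real d) ^ k)
              \<longrightarrow> (\<exists>c' C' k'. c' > 0 \<and> C' > 0 \<and>
                     (\<forall>\<^sub>F d in at_top. (\<forall>V W. eval_loss d (N d) V W \<ge> c' * real d / ln (real d) ^ k')
                                     \<and> opt_eval_loss d (N d) \<le> C' * real d * ln (real d) ^ k'))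
                  \<and> filterlim (\<lambda>d. opt_eval_loss d (N d)) at_top at_top)"
proof (rule exI[of _ "1/6"], intro conjI)
  show "(0::real) < 1 / 6" by simp
  show "\<forall>d n V W. 1 \<le> d \<and> d \<le> n \<longrightarrow> eval_loss d n V W \<ge> 1 / 6 * real d ^ 2 / real n"
    by (rule part1)
  show "\<forall>(N :: nat \<Rightarrow> nat) (C1::real) (C2::real) (k::nat).
              C1 > 0 \<and> C2 > 0 \<and> (\<forall>d. N d \<ge> 1) \<and>
              (\<forall>\<^sub>F d in at_top. C1 * real d / ln (real d) ^ k \<le> real (N d)
                                 \<and> real (N d) \<le> C2 * real d * ln (real d) ^ k)
              \<longrightarrow> (\<exists>c' C' k'. c' > 0 \<and> C' > 0 \<and>
                     (\<forall>\<^sub>F d in at_top. (\<forall>V W. eval_loss d (N d) V W \<ge> c' * real d / ln (real d) ^ k')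
                                     \<and> opt_eval_loss d (N d) \<le> C' * real d * ln (real d) ^ k'))
                  \<and> filterlim (\<lambda>d. opt_eval_loss d (N d)) at_top at_top"
    using part2 by blast
qed


end
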